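(* Let $K$ be an algebraically closed field of characteristic zero and $e_1\in 3+2\mathbb{N}$. Let $S\subset K^3$ be the surface $x_3^2+(x_1^{e_1}-x_2^2)x_1=0$, $S'\subset K^3$ the surface $\alpha^{2e_1}-4\beta\gamma=0$, $\sigma$ the involution $\sigma(\alpha,\beta,\gamma)=(-\alpha,\gamma,\beta)$ of $S'$, and $F:S'\to S$, $F(\alpha,\beta,\gamma)=(\alpha^2,\beta+\gamma,\alpha(\beta-\gamma))$. Then $F$ is the quotient map of the $\mathbb{Z}/2\mathbb{Z}$-action on $S'$ generated by $\sigma$; in particular $S=S'/\!/(\mathbb{Z}/2\mathbb{Z})$, i.e. via $F$ the ring $\mathcal{O}(S)$ is the ring of $\sigma^*$-invariants of $\mathcal{O}(S')$.
   Context: $\sigma^*(f)=f\circ\sigma$. *)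

theory Defs
  imports "HOL-Computational_Algebra.Polynomial"
begin

definition alg_closed :: "('a::field) itself \<Rightarrow> bool" where
  "alg_closed _ \<longleftrightarrow> (\<forall>p::'a poly. degree p > 0 \<longrightarrow> (\<exists>x. poly p x = 0))"

inductive_set polyfun3 :: "('a::comm_ring_1 \<times> 'a \<times> 'a \<Rightarrow> 'a) set" where
  const: "(\<lambda>_. c) \<in> polyfun3"
| x1: "(\<lambda>(a,b,c). a) \<in> polyfun3"
| x2: "(\<lambda>(a,b,c). b) \<in> polyfun3"
| x3: "(\<lambda>(a,b,c). c) \<in> polyfun3"
| add: "f \<in> polyfun3 \<Longrightarrow> g \<in> polyfun3 \<Longrightarrow> (\<lambda>x. f x + g x) \<in> polyfun3"
| mult: "f \<in> polyfun3 \<Longrightarrow> g \<in> polyfun3 \<Longrightarrow> (\<lambda>x. f x * g x) \<in> polyfun3"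

definition surfS :: "nat \<Rightarrow> ('a::comm_ring_1 \<times> 'a \<times> 'a) set" where
  "surfS e = {(x1,x2,x3). x3^2 + (x1^e - x2^2) * x1 = 0}"

definition surfS' :: "nat \<Rightarrow> ('a::comm_ring_1 \<times> 'a \<times> 'a) set" where
  "surfS' e = {(a,b,c). a^(2*e) - 4*b*c = 0}"

definition invol :: "'a::comm_ring_1 \<times> 'a \<times> 'a \<Rightarrow> 'a \<times> 'a \<times> 'a" where
  "invol = (\<lambda>(a,b,c). (-a, c, b))"

definition mapF :: "'a::comm_ring_1 \<times> 'a \<times> 'a \<Rightarrow> 'a \<times> 'a \<times> 'a" where
  "mapF = (\<lambda>(a,b,c). (a^2, b + c, a * (b - c)))"

end

theory Submission
  imports Defs
begin

lemma pf_fst: "(\<lambda>y. fst y) \<in> polyfun3"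
proof -
  have "(\<lambda>(a::'a,b::'a,c::'a). a) = (\<lambda>y. fst y)" by auto
  with polyfun3.x1 show ?thesis by metis
qed

lemma pf_snd1: "(\<lambda>y. fst (snd y)) \<in> polyfun3"
proof -
  have "(\<lambda>(a::'a,b::'a,c::'a). b) = (\<lambda>y. fst (snd y))" by auto
  with polyfun3.x2 show ?thesis by metis
qed

lemma pf_snd2: "(\<lambda>y. snd (snd y)) \<in> polyfun3"
proof -
  have "(\<lambda>(a::'a,b::'a,c::'a). c) = (\<lambda>y. snd (snd y))" by auto
  with polyfun3.x3 show ?thesis by metis
qed

lemma pf_pow: "f \<in> polyfun3 \<Longrightarrow> (\<lambda>x. f x ^ n) \<in> polyfun3"
proof (induction n)
  case 0 then show ?case using polyfun3.const[of 1] by simp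
next
  case (Suc n)
  then show ?case using polyfun3.mult[OF Suc.prems Suc.IH] by simp
qed

lemma pf_neg: "f \<in> polyfun3 \<Longrightarrow> (\<lambda>x. - f x) \<in> polyfun3"
  using polyfun3.mult[OF polyfun3.const[of "-1"], of f] by simp

lemma pf_diff: "f \<in> polyfun3 \<Longrightarrow> g \<in> polyfun3 \<Longrightarrow> (\<lambda>x. f x - g x) \<in> polyfun3"
  using polyfun3.add[OF _ pf_neg, of f g] by simp

lemmas pf_intros = polyfun3.add polyfun3.mult pf_diff pf_pow pf_fst pf_snd1 pf_snd2 polyfun3.const

lemma mult_id:
  fixes A V P0 P1 P2 Q0 Q1 Q2 :: "'a::comm_ring_1"
  shows "(P0 + A*P1 + V*P2) * (Q0 + A*Q1 + V*Q2) =
    (P0*Q0 + (A*A)*(P1*Q1) + (V*V)*(P2*Q2) + (A*V)*(P1*Q2+P2*Q1)) + A*(P0*Q1+P1*Q0) + V*(P0*Q2+P2*Q0)"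
  by (simp add: algebra_simps)

lemma decomp:
  assumes "(g :: 'a::field_char_0 \<times> 'a \<times> 'a \<Rightarrow> 'a) \<in> polyfun3"
  shows "\<exists>p0\<in>polyfun3. \<exists>p1\<in>polyfun3. \<exists>p2\<in>polyfun3. \<forall>a b c. (a,b,c) \<in> surfS' e \<longrightarrow>
     g (a,b,c) = p0 (mapF (a,b,c)) + a * p1 (mapF (a,b,c)) + (b - c) * p2 (mapF (a,b,c))"
  using assms
proof (induction g rule: polyfun3.induct)
  case (const c)
  show ?case
    by (rule bexI[of _ "\<lambda>_. c"], rule bexI[of _ "\<lambda>_. 0"], rule bexI[of _ "\<lambda>_. 0"])
       (auto intro: pf_intros)
next
  case x1
  show ?case
    by (rule bexI[of _ "\<lambda>_. 0"], rule bexI[of _ "\<lambda>_. 1"], rule bexI[of _ "\<lambda>_. 0"])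
       (auto intro: pf_intros)
next
  case x2
  show ?case
    by (rule bexI[of _ "\<lambda>y. fst (snd y) * (1/2)"], rule bexI[of _ "\<lambda>_. 0"], rule bexI[of _ "\<lambda>_. 1/2"])
       ((auto simp: mapF_def field_simps)[1], (intro pf_intros)+)
next
  case x3
  show ?case
    by (rule bexI[of _ "\<lambda>y. fst (snd y) * (1/2)"], rule bexI[of _ "\<lambda>_. 0"], rule bexI[of _ "\<lambda>_. -1/2"])
       ((auto simp: mapF_def field_simps)[1], (intro pf_intros)+)
next
  case (add f g)
  from add.IH obtain p0 p1 p2 where p: "p0 \<in> polyfun3" "p1 \<in> polyfun3" "p2 \<in> polyfun3"
    "\<forall>a b c. (a,b,c) \<in> surfS' e \<longrightarrow>
     f (a,b,c) = p0 (mapF (a,b,c)) + a * p1 (mapF (a,b,c)) + (b - c) * p2 (mapF (a,b,c))" by blast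
  from add.IH obtain q0 q1 q2 where q: "q0 \<in> polyfun3" "q1 \<in> polyfun3" "q2 \<in> polyfun3"
    "\<forall>a b c. (a,b,c) \<in> surfS' e \<longrightarrow>
     g (a,b,c) = q0 (mapF (a,b,c)) + a * q1 (mapF (a,b,c)) + (b - c) * q2 (mapF (a,b,c))" by blast
  show ?case
    apply (rule bexI[of _ "\<lambda>y. p0 y + q0 y"], rule bexI[of _ "\<lambda>y. p1 y + q1 y"], rule bexI[of _ "\<lambda>y. p2 y + q2 y"])
    using p q by (auto intro!: pf_intros simp: algebra_simps)
next
  case (mult f g)
  from mult.IH obtain p0 p1 p2 where p: "p0 \<in> polyfun3" "p1 \<in> polyfun3" "p2 \<in> polyfun3"
    "\<forall>a b c. (a,b,c) \<in> surfS' e \<longrightarrow>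
     f (a,b,c) = p0 (mapF (a,b,c)) + a * p1 (mapF (a,b,c)) + (b - c) * p2 (mapF (a,b,c))" by blast
  from mult.IH obtain q0 q1 q2 where q: "q0 \<in> polyfun3" "q1 \<in> polyfun3" "q2 \<in> polyfun3"
    "\<forall>a b c. (a,b,c) \<in> surfS' e \<longrightarrow>
     g (a,b,c) = q0 (mapF (a,b,c)) + a * q1 (mapF (a,b,c)) + (b - c) * q2 (mapF (a,b,c))" by blast
  show ?case
  proof (rule bexI[of _ "\<lambda>y. p0 y * q0 y + fst y * (p1 y * q1 y)
        + ((fst (snd y))^2 - (fst y)^e) * (p2 y * q2 y) + snd (snd y) * (p1 y * q2 y + p2 y * q1 y)"],
      rule bexI[of _ "\<lambda>y. p0 y * q1 y + p1 y * q0 y"], rule bexI[of _ "\<lambda>y. p0 y * q2 y + p2 y * q0 y"])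
    show "(\<lambda>y. p0 y * q2 y + p2 y * q0 y) \<in> polyfun3" using p q by (intro pf_intros)
    show "(\<lambda>y. p0 y * q1 y + p1 y * q0 y) \<in> polyfun3" using p q by (intro pf_intros)
    show "(\<lambda>y. p0 y * q0 y + fst y * (p1 y * q1 y)
        + ((fst (snd y))^2 - (fst y)^e) * (p2 y * q2 y) + snd (snd y) * (p1 y * q2 y + p2 y * q1 y)) \<in> polyfun3"
      using p q by (intro pf_intros)
    show "\<forall>a b c. (a, b, c) \<in> surfS' e \<longrightarrow>
         f (a, b, c) * g (a, b, c) =
         (\<lambda>y. p0 y * q0 y + fst y * (p1 y * q1 y) + ((fst (snd y))\<^sup>2 - fst y ^ e) * (p2 y * q2 y) +
               snd (snd y) * (p1 y * q2 y + p2 y * q1 y))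
          (mapF (a, b, c)) +
         a * (\<lambda>y. p0 y * q1 y + p1 y * q0 y) (mapF (a, b, c)) +
         (b - c) * (\<lambda>y. p0 y * q2 y + p2 y * q0 y) (mapF (a, b, c))"
    proof (intro allI impI)
      fix a b c assume S: "(a,b,c) \<in> (surfS' e :: ('a\<times>'a\<times>'a) set)"
      define m where "m = mapF (a,b,c)"
      have m: "fst m = a*a" "fst (snd m) = b + c" "snd (snd m) = a * (b - c)"
        by (simp_all add: m_def mapF_def power2_eq_square)
      have e: "a^(2*e) = 4*b*c" using S by (simp add: surfS'_def)
      have vv: "(b-c)*(b-c) = (fst (snd m))^2 - (fst m)^e"
        proof -
        have "(a*a)^e = a^(2*e)" by (simp add: power_mult power2_eq_square)
        then have "(fst m)^e = 4*b*c" using e m(1) by simp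
        then show ?thesis using m(2) by (simp add: power2_eq_square algebra_simps)
      qed
      have "f (a,b,c) * g (a,b,c) = (p0 m + a * p1 m + (b-c) * p2 m) * (q0 m + a * q1 m + (b-c) * q2 m)"
        using p(4) q(4) S by (simp add: m_def)
      also have "\<dots> = p0 m * q0 m + (a*a) * (p1 m * q1 m) + ((b-c)*(b-c)) * (p2 m * q2 m)
          + (a*(b-c)) * (p1 m * q2 m + p2 m * q1 m) + a * (p0 m * q1 m + p1 m * q0 m)
          + (b-c) * (p0 m * q2 m + p2 m * q0 m)" by (rule mult_id)
      also have "\<dots> = p0 m * q0 m + fst m * (p1 m * q1 m) + ((fst (snd m))^2 - (fst m)^e) * (p2 m * q2 m)
          + snd (snd m) * (p1 m * q2 m + p2 m * q1 m) + a * (p0 m * q1 m + p1 m * q0 m)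
          + (b-c) * (p0 m * q2 m + p2 m * q0 m)" by (simp only: m vv)
      finally show "f (a, b, c) * g (a, b, c) =
         (\<lambda>y. p0 y * q0 y + fst y * (p1 y * q1 y) + ((fst (snd y))\<^sup>2 - fst y ^ e) * (p2 y * q2 y) +
               snd (snd y) * (p1 y * q2 y + p2 y * q1 y))
          (mapF (a, b, c)) +
         a * (\<lambda>y. p0 y * q1 y + p1 y * q0 y) (mapF (a, b, c)) +
         (b - c) * (\<lambda>y. p0 y * q2 y + p2 y * q0 y) (mapF (a, b, c))" by (simp add: m_def)
    qed
  qed
qed


lemma four_lem: "4*((u + w)/2)*((u - w)/2) = u*u - w*(w::'a::field_char_0)"
proof -
  have "4*((u + w)/2)*((u - w)/2) = (u+w)*(u-w)" by (simp add: field_simps)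
  then show ?thesis by (simp add: algebra_simps)
qed

lemma sqrt_ex:
  assumes "alg_closed TYPE('a::field)"
  shows "\<exists>r::'a. r*r = x"
proof -
  have "degree [:-x, 0, 1::'a:] > 0" by simp
  then obtain r where "poly [:-x, 0, 1:] r = 0" using assms unfolding alg_closed_def by blast
  then show ?thesis by (intro exI[of _ r]) (simp add: algebra_simps)
qed

lemma surj_part:
  assumes "alg_closed TYPE('a::field_char_0)" and "e > 0"
  shows "mapF ` (surfS' e :: ('a \<times> 'a \<times> 'a) set) = surfS e"
proof
  show "mapF ` (surfS' e :: ('a \<times> 'a \<times> 'a) set) \<subseteq> surfS e"
  proof
    fix y :: "'a \<times> 'a \<times> 'a" assume "y \<in> mapF ` (surfS' e :: ('a \<times> 'a \<times> 'a) set)"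
    then obtain a b c where S: "(a,b,c) \<in> (surfS' e :: ('a \<times> 'a \<times> 'a) set)" and y: "y = mapF (a,b,c)" by auto
    have e: "a^(2*e) = 4*b*c" using S by (simp add: surfS'_def)
    have "(a^2)^e = 4*b*c" using e by (simp add: power_mult)
    then have "(a * (b - c))^2 + ((a^2)^e - (b+c)^2) * a^2 = 0"
      by (simp add: power2_eq_square algebra_simps)
    then show "y \<in> (surfS e :: ('a \<times> 'a \<times> 'a) set)" using y by (simp add: surfS_def mapF_def)
  qed
next
  show "surfS e \<subseteq> mapF ` (surfS' e :: ('a \<times> 'a \<times> 'a) set)"
  proof
    fix y assume "y \<in> (surfS e :: ('a \<times> 'a \<times> 'a) set)"
    then obtain x1 x2 x3 where y: "y = (x1,x2,x3)" and eq: "x3^2 + (x1^e - x2^2) * x1 = 0"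
      by (auto simp: surfS_def)
    obtain r where r: "r*r = x1" using sqrt_ex[OF assms(1)] by blast
    show "y \<in> mapF ` surfS' e"
    proof (cases "r = 0")
      case True
      then have "x1 = 0" using r by simp
      then have "x3 = 0" using eq by simp
      have "(0::'a, x2, 0::'a) \<in> surfS' e" using assms(2) by (simp add: surfS'_def)
      moreover have "mapF (0::'a, x2, 0::'a) = y" using y \<open>x1 = 0\<close> \<open>x3 = 0\<close> by (simp add: mapF_def)
      ultimately show ?thesis by (metis image_eqI)
    next
      case False
      define b where "b = (x2 + x3/r)/2"
      define c where "c = (x2 - x3/r)/2"
      have r2e: "r^(2*e) = x1^e" using r by (simp add: power_mult power2_eq_square)
      have x3: "x3*x3 = (x2*x2 - x1^e) * (r*r)" using eq r by (simp add: power2_eq_square algebra_simps)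
      have "4*((x2 + x3/r)/2)*((x2 - x3/r)/2) = x2*x2 - (x3/r)*(x3/r)"
        by (rule four_lem)
      then have "4*b*c = x2*x2 - (x3/r)*(x3/r)" by (simp add: b_def c_def)
      also have "(x3/r)*(x3/r) = x2*x2 - x1^e" using x3 False by (simp add: field_simps)
      finally have "r^(2*e) - 4*b*c = 0" using r2e by simp
      then have "(r,b,c) \<in> surfS' e" by (simp add: surfS'_def)
      moreover have "mapF (r,b,c) = y"
        using y r False by (simp add: mapF_def b_def c_def field_simps power2_eq_square)
      ultimately show ?thesis by (metis image_eqI)
    qed
  qed
qed

theorem lemma10:
  fixes e1 :: nat
  assumes "alg_closed TYPE('a::field_char_0)"
    and "\<exists>k. e1 = 3 + 2 * k"
  shows "invol ` (surfS' e1 :: ('a \<times> 'a \<times> 'a) set) \<subseteq> surfS' e1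
    \<and> (\<forall>x \<in> (surfS' e1 :: ('a \<times> 'a \<times> 'a) set). invol (invol x) = x)
    \<and> mapF ` (surfS' e1 :: ('a \<times> 'a \<times> 'a) set) = surfS e1
    \<and> (\<forall>x \<in> (surfS' e1 :: ('a \<times> 'a \<times> 'a) set). mapF (invol x) = mapF x)
    \<and> (\<forall>p \<in> (polyfun3 :: ('a \<times> 'a \<times> 'a \<Rightarrow> 'a) set). \<forall>q \<in> polyfun3.
          (\<forall>x \<in> surfS' e1. p (mapF x) = q (mapF x)) \<longrightarrow> (\<forall>y \<in> surfS e1. p y = q y))
    \<and> (\<forall>g \<in> (polyfun3 :: ('a \<times> 'a \<times> 'a \<Rightarrow> 'a) set).
          (\<forall>x \<in> surfS' e1. g (invol x) = g x) \<longrightarrow>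
          (\<exists>p \<in> polyfun3. \<forall>x \<in> surfS' e1. g x = p (mapF x)))"
proof -
  have epos: "e1 > 0" using assms(2) by auto
  have inv: "invol ` (surfS' e1 :: ('a \<times> 'a \<times> 'a) set) \<subseteq> surfS' e1"
  proof -
    have "\<And>a::'a. (-a)^(2*e1) = a^(2*e1)" by (simp add: power_mult)
    then show ?thesis by (auto simp: invol_def surfS'_def)
  qed
  have invinv: "\<forall>x \<in> (surfS' e1 :: ('a \<times> 'a \<times> 'a) set). invol (invol x) = x"
    by (auto simp: invol_def)
  have sj: "mapF ` (surfS' e1 :: ('a \<times> 'a \<times> 'a) set) = surfS e1"
    by (rule surj_part[OF assms(1) epos])
  have Fi: "\<forall>x \<in> (surfS' e1 :: ('a \<times> 'a \<times> 'a) set). mapF (invol x) = mapF x"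
    by (auto simp: invol_def mapF_def algebra_simps)
  have pq: "\<forall>p \<in> (polyfun3 :: ('a \<times> 'a \<times> 'a \<Rightarrow> 'a) set). \<forall>q \<in> polyfun3.
          (\<forall>x \<in> surfS' e1. p (mapF x) = q (mapF x)) \<longrightarrow> (\<forall>y \<in> surfS e1. p y = q y)"
  proof (intro ballI impI)
    fix p q :: "'a \<times> 'a \<times> 'a \<Rightarrow> 'a" and y
    assume h: "\<forall>x\<in>(surfS' e1 :: ('a \<times> 'a \<times> 'a) set). p (mapF x) = q (mapF x)" and "y \<in> (surfS e1 :: ('a \<times> 'a \<times> 'a) set)"
    then obtain x where "x \<in> (surfS' e1 :: ('a \<times> 'a \<times> 'a) set)" "y = mapF x" using sj by blast
    then show "p y = q y" using h by simp
  qed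
  have last: "\<forall>g \<in> (polyfun3 :: ('a \<times> 'a \<times> 'a \<Rightarrow> 'a) set).
          (\<forall>x \<in> surfS' e1. g (invol x) = g x) \<longrightarrow>
          (\<exists>p \<in> polyfun3. \<forall>x \<in> surfS' e1. g x = p (mapF x))"
  proof (intro ballI impI)
    fix g :: "'a \<times> 'a \<times> 'a \<Rightarrow> 'a"
    assume g: "g \<in> polyfun3" and ginv: "\<forall>x \<in> surfS' e1. g (invol x) = g x"
    obtain p0 p1 p2 where p: "p0 \<in> polyfun3" 
      "\<forall>a b c. (a,b,c) \<in> surfS' e1 \<longrightarrow>
     g (a,b,c) = p0 (mapF (a,b,c)) + a * p1 (mapF (a,b,c)) + (b - c) * p2 (mapF (a,b,c))"
      using decomp[OF g, of e1] by blast
    show "\<exists>p \<in> polyfun3. \<forall>x \<in> surfS' e1. g x = p (mapF x)"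
    proof (intro bexI[OF _ p(1)] ballI)
      fix x assume xS: "x \<in> (surfS' e1 :: ('a \<times> 'a \<times> 'a) set)"
      obtain a b c where x: "x = (a,b,c)" by (cases x)
      have iS: "(-a,c,b) \<in> surfS' e1" using inv xS x by (auto simp: invol_def)
      have Fx: "mapF (-a,c,b) = mapF (a,b,c)" by (simp add: mapF_def algebra_simps)
      have "g (a,b,c) = g (-a,c,b)" using ginv[rule_format, OF xS] x by (simp add: invol_def)
      have g1: "g (a,b,c) = p0 (mapF x) + a * p1 (mapF x) + (b - c) * p2 (mapF x)"
        using p(2) xS x by simp
      have g2: "g (-a,c,b) = p0 (mapF x) - a * p1 (mapF x) - (b - c) * p2 (mapF x)"
        using p(2)[rule_format, OF iS] Fx x by (simp add: algebra_simps)
      have s: "g (a,b,c) + g (a,b,c) = (p0 (mapF x) + a * p1 (mapF x) + (b - c) * p2 (mapF x)) + (p0 (mapF x) - a * p1 (mapF x) - (b - c) * p2 (mapF x))"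
      proof -
        have "g (a,b,c) + g (-a,c,b) = (p0 (mapF x) + a * p1 (mapF x) + (b - c) * p2 (mapF x)) + (p0 (mapF x) - a * p1 (mapF x) - (b - c) * p2 (mapF x))"
          by (simp only: g1 g2)
        then show ?thesis by (simp only: \<open>g (a,b,c) = g (-a,c,b)\<close>)
      qed
      have "(p0 (mapF x) + a * p1 (mapF x) + (b - c) * p2 (mapF x)) + (p0 (mapF x) - a * p1 (mapF x) - (b - c) * p2 (mapF x)) = 2 * p0 (mapF x)"
        by (simp add: algebra_simps)
      with s have "2 * g (a,b,c) = 2 * p0 (mapF x)" by (simp only: mult_2)
      then show "g x = p0 (mapF x)" using x by simp
    qed
  qed
  show ?thesis using inv invinv sj Fi pq last by blast
qed

end
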